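(* Let $\Omega\subset\mathbb R^d$ be compact with nonempty interior. Then the set of restrictions to $\Omega$ of the maps $$\mathbf x\mapsto \mathbf W^T\,\mathrm{ReLU}(\mathbf W\mathbf x-\mathbf b),\qquad p\in\mathbb N,\ \mathbf W\in\mathbb R^{p\times d},\ \mathbf b\in\mathbb R^p,$$ (with $\mathrm{ReLU}(t)=\max(t,0)$ applied componentwise) is not dense in $\mathcal E(\Omega)$ with respect to the norm $\|\mathbf f\|_{C(\Omega)}=\sup_{\mathbf x\in\Omega}\|\mathbf f(\mathbf x)\|$.
   Context: $C^{0,1}_{\uparrow}(\mathbb R)$ denotes the set of Lipschitz-continuous increasing functions $\mathbb R\to\mathbb R$. $\mathcal E(\mathbb R^d)$ is the set of maps $\mathbf x\mapsto\mathbf W^T\boldsymbol\sigma(\mathbf W\mathbf x)$ with $p\in\mathbb N$, $\mathbf W\in\mathbb R^{p\times d}$, and $\boldsymbol\sigma$ acting componentwise as $(\boldsymbol\sigma(\mathbf z))_i=\sigma_i(z_i)$ with each $\sigma_i\in C^{0,1}_{\uparrow}(\mathbb R)$; $\mathcal E(\Omega)$ is the set of restrictions to $\Omega$ of elements of $\mathcal E(\mathbb R^d)$. *)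

theory Defs
  imports "HOL-Analysis.Analysis"
begin

definition lip_incr :: "(real \<Rightarrow> real) \<Rightarrow> bool" where
  "lip_incr \<sigma> \<longleftrightarrow> mono \<sigma> \<and> (\<exists>L. L-lipschitz_on UNIV \<sigma>)"

text \<open>E(R^d): maps x |-> W^T sigma(W x), where the p x d matrix W is given by
  its rows w 0, ..., w (p-1); then W^T sigma(W x) = sum_{i<p} sigma_i(w_i . x) w_i.\<close>
definition E_Rd :: "((real^'d) \<Rightarrow> real^'d) set" where
  "E_Rd = {f. \<exists>(p::nat) (w::nat \<Rightarrow> real^'d) (\<sigma>::nat \<Rightarrow> real \<Rightarrow> real).
              (\<forall>i<p. lip_incr (\<sigma> i)) \<and>
              f = (\<lambda>x. \<Sum>i<p. \<sigma> i (w i \<bullet> x) *\<^sub>R w i)}"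

definition E_on :: "(real^'d) set \<Rightarrow> ((real^'d) \<Rightarrow> real^'d) set" where
  "E_on \<Omega> = (\<lambda>f. restrict f \<Omega>) ` E_Rd"

definition relu_on :: "(real^'d) set \<Rightarrow> ((real^'d) \<Rightarrow> real^'d) set" where
  "relu_on \<Omega> = (\<lambda>f. restrict f \<Omega>) `
     {f. \<exists>(p::nat) (w::nat \<Rightarrow> real^'d) (b::nat \<Rightarrow> real).
            f = (\<lambda>x. \<Sum>i<p. max (w i \<bullet> x - b i) 0 *\<^sub>R w i)}"

definition sup_dist :: "'a set \<Rightarrow> ('a \<Rightarrow> 'b::real_normed_vector) \<Rightarrow> ('a \<Rightarrow> 'b) \<Rightarrow> real" where
  "sup_dist \<Omega> f g = (SUP x\<in>\<Omega>. norm (f x - g x))"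

end

theory Submission
  imports Defs
begin

lemma phi_mono:
  fixes a b t m :: real
  assumes "t \<le> m"
  shows "a * max (a*t + b) 0 \<le> a * max (a*m + b) 0"
proof (cases "a \<ge> 0")
  case True
  have "a*t \<le> a*m" using True assms by (simp add: mult_left_mono)
  hence "max (a*t + b) 0 \<le> max (a*m + b) 0" by simp
  thus ?thesis using True by (rule mult_left_mono)
next
  case False
  have "a*m \<le> a*t" using False assms by (simp add: mult_left_mono_neg)
  hence "max (a*m + b) 0 \<le> max (a*t + b) 0" by simp
  thus ?thesis using False by (intro mult_left_mono_neg) auto
qed

lemma max_conv:
  fixes x y z :: real
  assumes "2*y = x + z"
  shows "2 * max y 0 \<le> max x 0 + max z 0"
  using assms by (simp add: max_def)

lemma phi_convex:
  fixes a b t m u :: real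
  assumes "a \<ge> 0" "2*m = t + u"
  shows "2*(a * max (a*m + b) 0) \<le> a * max (a*t + b) 0 + a * max (a*u + b) 0"
proof -
  have e: "2*(a*m+b) = (a*t+b) + (a*u+b)" using assms(2)
    by (metis (no_types) add.commute add.left_commute distrib_left mult.left_commute mult_2)
  have "2 * max (a*m+b) 0 \<le> max (a*t+b) 0 + max (a*u+b) 0" using e by (rule max_conv)
  hence "a * (2 * max (a*m+b) 0) \<le> a * (max (a*t+b) 0 + max (a*u+b) 0)"
    using assms(1) by (rule mult_left_mono)
  thus ?thesis by (simp add: algebra_simps)
qed

lemma phi_concave:
  fixes a b t m u :: real
  assumes "a \<le> 0" "2*m = t + u"
  shows "2*(a * max (a*m + b) 0) \<ge> a * max (a*t + b) 0 + a * max (a*u + b) 0"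
proof -
  have e: "2*(a*m+b) = (a*t+b) + (a*u+b)" using assms(2)
    by (metis (no_types) add.commute add.left_commute distrib_left mult.left_commute mult_2)
  have "2 * max (a*m+b) 0 \<le> max (a*t+b) 0 + max (a*u+b) 0" using e by (rule max_conv)
  hence "a * (2 * max (a*m+b) 0) \<ge> a * (max (a*t+b) 0 + max (a*u+b) 0)"
    using assms(1) by (rule mult_left_mono_neg)
  thus ?thesis by (simp add: algebra_simps)
qed

theorem proposition3:
  fixes \<Omega> :: "(real^'d) set"
  assumes "compact \<Omega>" and "interior \<Omega> \<noteq> {}"
  shows "\<not> (\<forall>f\<in>E_on \<Omega>. \<forall>\<epsilon>>0. \<exists>g\<in>relu_on \<Omega>. sup_dist \<Omega> f g < \<epsilon>)"
proof
  assume H: "\<forall>f\<in>E_on \<Omega>. \<forall>\<epsilon>>0. \<exists>g\<in>relu_on \<Omega>. sup_dist \<Omega> f g < \<epsilon>"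
  obtain x0 where "x0 \<in> interior \<Omega>" using assms(2) by blast
  then obtain r where r: "r > 0" "ball x0 r \<subseteq> \<Omega>" using mem_interior by blast
  define e :: "real^'d" where "e = axis undefined 1"
  have ee: "e \<bullet> e = 1" unfolding e_def by (simp add: inner_axis_axis)
  have ne: "norm e = 1" unfolding e_def by simp
  define d where "d = r/3"
  have d: "d > 0" using r by (simp add: d_def)
  define c where "c = e \<bullet> x0"
  define \<sigma> where "\<sigma> = (\<lambda>s::real. min (max (s - c) 0) d)"
  define F where "F = (\<lambda>x::real^'d. \<sigma> (e \<bullet> x) *\<^sub>R e)"
  have lip: "lip_incr \<sigma>"
    unfolding lip_incr_def
  proof
    show "mono \<sigma>" unfolding mono_def \<sigma>_def by auto
    have "1-lipschitz_on UNIV \<sigma>"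
      by (rule lipschitz_onI) (auto simp: \<sigma>_def dist_real_def)
    thus "\<exists>L. L-lipschitz_on UNIV \<sigma>" by blast
  qed
  have "F \<in> E_Rd"
    unfolding E_Rd_def
    apply (rule CollectI)
    apply (rule exI[of _ 1], rule exI[of _ "\<lambda>_. e"], rule exI[of _ "\<lambda>_. \<sigma>"])
    using lip by (auto simp: F_def)
  hence "restrict F \<Omega> \<in> E_on \<Omega>" unfolding E_on_def by blast
  moreover define \<epsilon> where "\<epsilon> = d/6"
  have "\<epsilon> > 0" using d by (simp add: \<epsilon>_def)
  ultimately obtain g where g: "g \<in> relu_on \<Omega>" "sup_dist \<Omega> (restrict F \<Omega>) g < \<epsilon>"
    using H by blast
  from g(1) obtain f0 where f0: "f0 \<in> {f. \<exists>(p::nat) (w::nat \<Rightarrow> real^'d) (b::nat \<Rightarrow> real).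
            f = (\<lambda>x. \<Sum>i<p. max (w i \<bullet> x - b i) 0 *\<^sub>R w i)}" "g = restrict f0 \<Omega>"
    unfolding relu_on_def by blast
  then obtain p :: nat and w :: "nat \<Rightarrow> real^'d" and b :: "nat \<Rightarrow> real" where "f0 = (\<lambda>x. \<Sum>i<p. max (w i \<bullet> x - b i) 0 *\<^sub>R w i)" by blast
  with f0(2) have gG: "g = restrict (\<lambda>x. \<Sum>i<p. max (w i \<bullet> x - b i) 0 *\<^sub>R w i) \<Omega>" by simp
  define G where "G = (\<lambda>x. \<Sum>i<p. max (w i \<bullet> x - b i) 0 *\<^sub>R w i)"
  have SUPeq: "sup_dist \<Omega> (restrict F \<Omega>) g = (SUP x\<in>\<Omega>. norm (F x - G x))"
    unfolding sup_dist_def gG G_def by (rule SUP_cong) auto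
  have cont: "continuous_on \<Omega> (\<lambda>x. norm (F x - G x))"
    unfolding F_def G_def \<sigma>_def by (intro continuous_intros)
  have "compact ((\<lambda>x. norm (F x - G x)) ` \<Omega>)"
    using cont assms(1) by (rule compact_continuous_image)
  hence bdd: "bdd_above ((\<lambda>x. norm (F x - G x)) ` \<Omega>)"
    by (intro bounded_imp_bdd_above compact_imp_bounded)
  have pt: "\<bar>\<sigma> (c + t) - (\<Sum>i<p. (w i \<bullet> e) * max ((w i \<bullet> e) * t + (w i \<bullet> x0 - b i)) 0)\<bar> < \<epsilon>"
    if "\<bar>t\<bar> < r" for t
  proof -
    let ?x = "x0 + t *\<^sub>R e"
    have "dist x0 ?x = \<bar>t\<bar>" using ne by (simp add: dist_norm)
    hence "?x \<in> \<Omega>" using r that by auto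
    hence "norm (F ?x - G ?x) \<le> (SUP x\<in>\<Omega>. norm (F x - G x))"
      using bdd by (intro cSUP_upper)
    hence n: "norm (F ?x - G ?x) < \<epsilon>" using g(2) SUPeq by linarith
    have "\<bar>e \<bullet> (F ?x - G ?x)\<bar> \<le> norm e * norm (F ?x - G ?x)"
      by (rule Cauchy_Schwarz_ineq2)
    hence "\<bar>e \<bullet> (F ?x - G ?x)\<bar> < \<epsilon>" using n ne by simp
    moreover have "e \<bullet> F ?x = \<sigma> (c + t)"
      unfolding F_def c_def by (simp add: inner_add_right ee)
    moreover have "e \<bullet> G ?x = (\<Sum>i<p. (w i \<bullet> e) * max ((w i \<bullet> e) * t + (w i \<bullet> x0 - b i)) 0)"
      unfolding G_def inner_sum_right
    proof (rule sum.cong)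
      fix i
      have "w i \<bullet> ?x = (w i \<bullet> e) * t + w i \<bullet> x0"
        by (simp add: inner_add_right)
      moreover have "e \<bullet> (max (w i \<bullet> ?x - b i) 0 *\<^sub>R w i) = max (w i \<bullet> ?x - b i) 0 * (e \<bullet> w i)"
        by simp
      moreover have "e \<bullet> w i = w i \<bullet> e" by (rule inner_commute)
      ultimately show "e \<bullet> (max (w i \<bullet> ?x - b i) 0 *\<^sub>R w i) = (w i \<bullet> e) * max ((w i \<bullet> e) * t + (w i \<bullet> x0 - b i)) 0"
        by (metis add_diff_eq mult.commute)
    qed simp
    ultimately show ?thesis by (simp add: inner_diff_right)
  qed
  define \<phi> where "\<phi> = (\<lambda>i t. (w i \<bullet> e) * max ((w i \<bullet> e) * t + (w i \<bullet> x0 - b i)) 0)"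
  define H1 where "H1 = (\<lambda>t. \<Sum>i<p. if w i \<bullet> e \<ge> 0 then \<phi> i t else 0)"
  define H2 where "H2 = (\<lambda>t. \<Sum>i<p. if w i \<bullet> e \<ge> 0 then 0 else \<phi> i t)"
  have split: "(\<Sum>i<p. (w i \<bullet> e) * max ((w i \<bullet> e) * t + (w i \<bullet> x0 - b i)) 0) = H1 t + H2 t" for t
    unfolding H1_def H2_def \<phi>_def sum.distrib[symmetric] by (rule sum.cong) auto
  have p1: "\<bar>\<sigma> (c + t) - (H1 t + H2 t)\<bar> < \<epsilon>" if "\<bar>t\<bar> < r" for t
    using pt[OF that] unfolding split .
  have a1: "\<bar>0 - (H1 (-d) + H2 (-d))\<bar> < \<epsilon>"
    using p1[of "-d"] d r by (simp add: \<sigma>_def d_def)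
  have a2: "\<bar>0 - (H1 0 + H2 0)\<bar> < \<epsilon>"
    using p1[of "0"] d r by (simp add: \<sigma>_def d_def)
  have a3: "\<bar>d - (H1 d + H2 d)\<bar> < \<epsilon>"
    using p1[of "d"] d r by (simp add: \<sigma>_def d_def)
  have a4: "\<bar>d - (H1 (2*d) + H2 (2*d))\<bar> < \<epsilon>"
    using p1[of "2*d"] d r by (simp add: \<sigma>_def d_def)
  have f1: "H1 (-d) \<le> H1 0"
    unfolding H1_def \<phi>_def
  proof (rule sum_mono)
    fix i
    show "(if w i \<bullet> e \<ge> 0 then (w i \<bullet> e) * max ((w i \<bullet> e) * (-d) + (w i \<bullet> x0 - b i)) 0 else 0)
       \<le> (if w i \<bullet> e \<ge> 0 then (w i \<bullet> e) * max ((w i \<bullet> e) * 0 + (w i \<bullet> x0 - b i)) 0 else 0)"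
      using phi_mono[of "-d" 0 "w i \<bullet> e" "w i \<bullet> x0 - b i"] d by auto
  qed
  have f4: "H2 d \<le> H2 (2*d)"
    unfolding H2_def \<phi>_def
  proof (rule sum_mono)
    fix i
    show "(if w i \<bullet> e \<ge> 0 then 0 else (w i \<bullet> e) * max ((w i \<bullet> e) * d + (w i \<bullet> x0 - b i)) 0)
       \<le> (if w i \<bullet> e \<ge> 0 then 0 else (w i \<bullet> e) * max ((w i \<bullet> e) * (2*d) + (w i \<bullet> x0 - b i)) 0)"
      using phi_mono[of d "2*d" "w i \<bullet> e" "w i \<bullet> x0 - b i"] d by auto
  qed
  have f3: "2 * H1 d \<le> H1 0 + H1 (2*d)"
    unfolding H1_def \<phi>_def sum_distrib_left sum.distrib[symmetric]
  proof (rule sum_mono)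
    fix i
    have "2*d = 0 + 2*d" by simp
    note q = phi_convex[of "w i \<bullet> e" d 0 "2*d" "w i \<bullet> x0 - b i", OF _ this]
    show "2 * (if w i \<bullet> e \<ge> 0 then (w i \<bullet> e) * max ((w i \<bullet> e) * d + (w i \<bullet> x0 - b i)) 0 else 0)
       \<le> (if w i \<bullet> e \<ge> 0 then (w i \<bullet> e) * max ((w i \<bullet> e) * 0 + (w i \<bullet> x0 - b i)) 0 else 0)
        + (if w i \<bullet> e \<ge> 0 then (w i \<bullet> e) * max ((w i \<bullet> e) * (2*d) + (w i \<bullet> x0 - b i)) 0 else 0)"
      using q by auto
  qed
  have f2: "H2 (-d) + H2 d \<le> 2 * H2 0"
    unfolding H2_def \<phi>_def sum_distrib_left sum.distrib[symmetric]
  proof (rule sum_mono)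
    fix i
    have "2*0 = -d + d" by simp
    note q = phi_concave[of "w i \<bullet> e" 0 "-d" d "w i \<bullet> x0 - b i", OF _ this]
    show "(if w i \<bullet> e \<ge> 0 then 0 else (w i \<bullet> e) * max ((w i \<bullet> e) * (-d) + (w i \<bullet> x0 - b i)) 0)
        + (if w i \<bullet> e \<ge> 0 then 0 else (w i \<bullet> e) * max ((w i \<bullet> e) * d + (w i \<bullet> x0 - b i)) 0)
       \<le> 2 * (if w i \<bullet> e \<ge> 0 then 0 else (w i \<bullet> e) * max ((w i \<bullet> e) * 0 + (w i \<bullet> x0 - b i)) 0)"
      using q by auto
  qed
  show False using a1 a2 a3 a4 f1 f2 f3 f4 d unfolding \<epsilon>_def by linarith
qed

end
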